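(* Let $T$ be a ring which is integral over its center $C=C(T)$. Suppose $A$ is a conch maximal subring of $C$, and suppose the integral closure $B$ of $A$ in $T$ (the set of elements of $T$ that are roots of monic polynomials with coefficients in $A$) is a subring of $T$. Then $T$ has a maximal subring $R$ with $B\subseteq R$ and $R\cap C=A$.
   Context: All rings are associative with identity $1\neq0$; subrings contain the identity. A maximal subring of a ring $S$ is a proper subring with no subring strictly between it and $S$. $T$ is integral over its center if every element of $T$ is a root of a monic polynomial with coefficients in $C(T)$. A conch maximal subring of the commutative ring $C$ is a maximal subring $A$ of $C$ for which there exists a unit $u$ of $C$ with $u\in A$ and $u^{-1}\notin A$. *)

theory Defs
  imports Main
begin

definition is_subring :: "'a::ring_1 set \<Rightarrow> bool" where
  "is_subring S \<longleftrightarrow> 1 \<in> S \<and> (\<forall>x\<in>S. \<forall>y\<in>S. x + y \<in> S \<and> x * y \<in> S) \<and> (\<forall>x\<in>S. - x \<in> S)"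

definition center :: "'a::ring_1 set" where
  "center = {c. \<forall>x. c * x = x * c}"

definition maximal_subring :: "'a::ring_1 set \<Rightarrow> 'a set \<Rightarrow> bool" where
  "maximal_subring S R \<longleftrightarrow> is_subring R \<and> R \<subseteq> S \<and> R \<noteq> S \<and>
     (\<forall>Q. is_subring Q \<and> R \<subseteq> Q \<and> Q \<subseteq> S \<longrightarrow> Q = R \<or> Q = S)"

definition integral_over :: "'a::ring_1 set \<Rightarrow> 'a \<Rightarrow> bool" where
  "integral_over S x \<longleftrightarrow> (\<exists>n c. (\<forall>i<n. c i \<in> S) \<and> x ^ n + (\<Sum>i<n. c i * x ^ i) = 0)"

definition integral_closure :: "'a::ring_1 set \<Rightarrow> 'a set" where
  "integral_closure S = {x. integral_over S x}"

definition conch_maximal_subring_of_center :: "'a::ring_1 set \<Rightarrow> bool" where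
  "conch_maximal_subring_of_center A \<longleftrightarrow> maximal_subring center A \<and>
     (\<exists>u v. u \<in> A \<and> v \<in> center \<and> u * v = 1 \<and> v * u = 1 \<and> v \<notin> A)"

end

theory Submission
  imports Defs
begin

lemma sr_zero: "is_subring S \<Longrightarrow> 0 \<in> S"
  unfolding is_subring_def by (metis add.right_inverse)

lemma sr_add: "is_subring S \<Longrightarrow> x \<in> S \<Longrightarrow> y \<in> S \<Longrightarrow> x + y \<in> S"
  unfolding is_subring_def by blast
lemma sr_mult: "is_subring S \<Longrightarrow> x \<in> S \<Longrightarrow> y \<in> S \<Longrightarrow> x * y \<in> S"
  unfolding is_subring_def by blast
lemma sr_neg: "is_subring S \<Longrightarrow> x \<in> S \<Longrightarrow> - x \<in> S"
  unfolding is_subring_def by blast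
lemma sr_one: "is_subring S \<Longrightarrow> 1 \<in> S"
  unfolding is_subring_def by blast

lemma sr_pow: "is_subring S \<Longrightarrow> x \<in> S \<Longrightarrow> x ^ n \<in> S"
  by (induction n) (auto intro: sr_one sr_mult)

lemma sr_sum: "is_subring S \<Longrightarrow> (\<And>i. i \<in> I \<Longrightarrow> f i \<in> S) \<Longrightarrow> sum f I \<in> S"
proof (induction I rule: infinite_finite_induct)
  case (infinite A) then show ?case by (simp add: sr_zero)
next
  case empty then show ?case by (simp add: sr_zero)
next
  case (insert x F) then show ?case by (simp add: sr_add)
qed

lemma cen: "c \<in> center \<Longrightarrow> c * x = x * c"
  unfolding center_def by blast

lemma cen_mult: "c \<in> center \<Longrightarrow> d \<in> center \<Longrightarrow> c * d \<in> center"
proof -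
  assume c: "c \<in> center" and d: "d \<in> center"
  have "c * d * x = x * (c * d)" for x
  proof -
    have "c * d * x = c * (x * d)" using cen[OF d, of x] by (simp add: mult.assoc)
    also have "\<dots> = (c * x) * d" by (simp add: mult.assoc)
    also have "\<dots> = x * (c * d)" using cen[OF c, of x] by (simp add: mult.assoc)
    finally show ?thesis .
  qed
  then show ?thesis unfolding center_def by blast
qed

lemma cen_pow: "c \<in> center \<Longrightarrow> c ^ n \<in> center"
proof (induction n)
  case 0 then show ?case by (simp add: center_def)
next
  case (Suc n) then show ?case by (simp add: cen_mult)
qed

lemma cen_subring: "is_subring (center :: 'a::ring_1 set)"
  unfolding is_subring_def
proof (intro conjI ballI)
  show "(1::'a) \<in> center" unfolding center_def by simp
next
  fix c d :: 'a assume c: "c \<in> center" and d: "d \<in> center"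
  show "c * d \<in> center" using cen_mult[OF c d] .
  have "(c + d) * x = x * (c + d)" for x
    using cen[OF c, of x] cen[OF d, of x] by (simp add: distrib_left distrib_right)
  then show "c + d \<in> center" unfolding center_def by blast
next
  fix c :: 'a assume c: "c \<in> center"
  have "(- c) * x = x * (- c)" for x using cen[OF c, of x] by simp
  then show "- c \<in> center" unfolding center_def by blast
qed

lemma pow_inv: "u * v = (1::'a::ring_1) \<Longrightarrow> u ^ k * v ^ k = 1"
proof (induction k)
  case 0 then show ?case by simp
next
  case (Suc k)
  have "u ^ Suc k * v ^ Suc k = u ^ k * (u * v) * v ^ k"
    by (simp only: power_Suc2[of u] power_Suc[of v] mult.assoc)
  then show ?case using Suc by simp
qed

lemma pow_inv2: "u * v = (1::'a::ring_1) \<Longrightarrow> i \<le> k \<Longrightarrow> u ^ k * v ^ i = u ^ (k - i)"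
proof -
  assume a: "u * v = 1" "i \<le> k"
  have "u ^ k = u ^ (k - i) * u ^ i" using a(2) by (simp add: power_add[symmetric])
  then have "u ^ k * v ^ i = u ^ (k - i) * (u ^ i * v ^ i)" by (simp add: mult.assoc)
  then show ?thesis using pow_inv[OF a(1)] by simp
qed

lemma cen_pow_mult: "u \<in> center \<Longrightarrow> (u * x) ^ n = u ^ n * x ^ n"
proof (induction n)
  case 0 then show ?case by simp
next
  case (Suc n)
  have "(u * x) ^ Suc n = u * x * (u ^ n * x ^ n)" using Suc by simp
  also have "\<dots> = u * (x * u ^ n) * x ^ n" by (simp add: mult.assoc)
  also have "\<dots> = u * (u ^ n * x) * x ^ n" using cen[OF cen_pow[OF Suc.prems]] by simp
  finally show ?case by (simp add: mult.assoc)
qed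


lemma sr_int: "is_subring S \<Longrightarrow> is_subring T \<Longrightarrow> is_subring (S \<inter> T)"
  unfolding is_subring_def by blast

theorem theorem3p1:
  fixes A :: "'a::ring_1 set"
  assumes "(1::'a) \<noteq> 0"
    and "\<forall>x::'a. integral_over center x"
    and "conch_maximal_subring_of_center A"
    and "is_subring (integral_closure A)"
  shows "\<exists>R. maximal_subring UNIV R \<and> integral_closure A \<subseteq> R \<and> R \<inter> center = A"
proof -
  define B where "B = integral_closure A"
  have mA: "maximal_subring center A" using assms(3) unfolding conch_maximal_subring_of_center_def by blast
  obtain u v where uA: "u \<in> A" and vc: "v \<in> center" and uv: "u * v = 1" and vu: "v * u = 1"
    and vA: "v \<notin> A"
    using assms(3) unfolding conch_maximal_subring_of_center_def by blast
  have srA: "is_subring A" and Ac: "A \<subseteq> center"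
    and maxA: "\<And>Q. is_subring Q \<Longrightarrow> A \<subseteq> Q \<Longrightarrow> Q \<subseteq> center \<Longrightarrow> Q = A \<or> Q = center"
    using mA unfolding maximal_subring_def by blast+
  have uc: "u \<in> center" using uA Ac by blast
  have srB: "is_subring B" using assms(4) B_def by simp
  have AB: "A \<subseteq> B"
  proof
    fix a assume a: "a \<in> A"
    have na: "- a \<in> A" using a srA sr_neg by blast
    have "integral_over A a" unfolding integral_over_def
      by (intro exI[of _ 1] exI[of _ "\<lambda>_. - a"]) (simp add: na)
    then show "a \<in> B" unfolding B_def integral_closure_def by simp
  qed
  have vB: "v \<notin> B"
  proof
    assume "v \<in> B"
    then obtain n c where c: "\<forall>i<n. c i \<in> A" and eq: "v ^ n + (\<Sum>i<n. c i * v ^ i) = 0"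
      unfolding B_def integral_closure_def integral_over_def by blast
    show False
    proof (cases n)
      case 0 then show False using eq assms(1) by simp
    next
      case (Suc k)
      have ukc: "u ^ k \<in> center" using cen_pow[OF uc] .
      have "u ^ k * (v ^ n + (\<Sum>i<n. c i * v ^ i)) = 0" using eq by simp
      moreover have "u ^ k * v ^ n = v"
      proof -
        have "u ^ k * v ^ n = (u ^ k * v ^ k) * v" using Suc by (simp only: power_Suc2[of v] mult.assoc)
        then show ?thesis using pow_inv[OF uv] by simp
      qed
      moreover have "u ^ k * (\<Sum>i<n. c i * v ^ i) = (\<Sum>i<n. c i * u ^ (k - i))"
        unfolding sum_distrib_left
      proof (rule sum.cong)
        fix i assume "i \<in> {..<n}"
        then have ik: "i \<le> k" using Suc by simp
        have "u ^ k * (c i * v ^ i) = (u ^ k * c i) * v ^ i" by (simp add: mult.assoc)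
        also have "\<dots> = c i * (u ^ k * v ^ i)" using cen[OF ukc] by (simp add: mult.assoc)
        also have "\<dots> = c i * u ^ (k - i)" using pow_inv2[OF uv ik] by simp
        finally show "u ^ k * (c i * v ^ i) = c i * u ^ (k - i)" .
      qed simp
      ultimately have "v + (\<Sum>i<n. c i * u ^ (k - i)) = 0" by (simp add: distrib_left)
      then have "v = - (\<Sum>i<n. c i * u ^ (k - i))" by (simp add: eq_neg_iff_add_eq_0)
      moreover have "(\<Sum>i<n. c i * u ^ (k - i)) \<in> A"
        using c by (intro sr_sum[OF srA] sr_mult[OF srA] sr_pow[OF srA uA]) auto
      ultimately show False using vA sr_neg[OF srA] by metis
    qed
  qed
  define S where "S = {c \<in> center. \<exists>m. \<forall>k\<ge>m. c * u ^ k \<in> A}"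
  have srS: "is_subring S"
    unfolding is_subring_def
  proof (intro conjI ballI)
    show "1 \<in> S" unfolding S_def using cen_subring sr_one sr_pow[OF srA uA] by fastforce
  next
    fix x y assume x: "x \<in> S" and y: "y \<in> S"
    then obtain m1 m2 where xc: "x \<in> center" and yc: "y \<in> center"
      and m1: "\<forall>k\<ge>m1. x * u ^ k \<in> A" and m2: "\<forall>k\<ge>m2. y * u ^ k \<in> A"
      unfolding S_def by blast
    have "\<forall>k\<ge>max m1 m2. (x + y) * u ^ k \<in> A"
      using m1 m2 by (auto simp: distrib_right intro!: sr_add[OF srA])
    then show "x + y \<in> S" unfolding S_def using xc yc sr_add[OF cen_subring] by blast
    have "\<forall>k\<ge>m1 + m2. (x * y) * u ^ k \<in> A"
    proof (intro allI impI)
      fix k assume k: "m1 + m2 \<le> k"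
      have "x * y * u ^ k = x * y * (u ^ m1 * u ^ (k - m1))"
        using k by (simp add: power_add[symmetric])
      also have "\<dots> = x * (y * u ^ m1) * u ^ (k - m1)" by (simp add: mult.assoc)
      also have "\<dots> = (x * u ^ m1) * (y * u ^ (k - m1))"
        using cen[OF yc, of "u ^ m1"] by (simp add: mult.assoc)
      finally show "(x * y) * u ^ k \<in> A" using m1 m2 k sr_mult[OF srA] by simp
    qed
    then show "x * y \<in> S" unfolding S_def using xc yc cen_mult by blast
  next
    fix x assume x: "x \<in> S"
    then obtain m where xc: "x \<in> center" and m: "\<forall>k\<ge>m. x * u ^ k \<in> A"
      unfolding S_def by blast
    have "\<forall>k\<ge>m. (- x) * u ^ k \<in> A" using m sr_neg[OF srA] by simp
    then show "- x \<in> S" unfolding S_def using xc sr_neg[OF cen_subring] by blast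
  qed
  have AS: "A \<subseteq> S" unfolding S_def using Ac sr_mult[OF srA] sr_pow[OF srA uA] by blast
  have vS: "v \<in> S"
  proof -
    have "\<forall>k\<ge>1. v * u ^ k \<in> A"
    proof (intro allI impI)
      fix k :: nat assume "1 \<le> k"
      then obtain j where "k = Suc j" by (cases k) auto
      then have "v * u ^ k = (v * u) * u ^ j" by (simp add: mult.assoc)
      then show "v * u ^ k \<in> A" using vu sr_pow[OF srA uA] by simp
    qed
    then show ?thesis unfolding S_def using vc by blast
  qed
  have Scen: "S = center" using maxA[OF srS AS] vS vA unfolding S_def by blast
  define F where "F = {Q. is_subring Q \<and> B \<subseteq> Q \<and> v \<notin> Q}"
  have "F \<noteq> {}" using srB vB unfolding F_def by blast
  moreover have "\<Union>CC \<in> F" if ne: "CC \<noteq> {}" and ch: "subset.chain F CC" for CC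
  proof -
    have CF: "CC \<subseteq> F" and tot: "\<forall>X\<in>CC. \<forall>Y\<in>CC. X \<subseteq> Y \<or> Y \<subseteq> X"
      using ch unfolding subset.chain_def by auto
    have "is_subring (\<Union>CC)" unfolding is_subring_def
    proof (intro conjI ballI)
      show "1 \<in> \<Union>CC" using ne CF unfolding F_def is_subring_def by blast
    next
      fix x y assume "x \<in> \<Union>CC" "y \<in> \<Union>CC"
      then obtain X Y where X: "X \<in> CC" "x \<in> X" and Y: "Y \<in> CC" "y \<in> Y" by blast
      have "\<exists>Z\<in>CC. x \<in> Z \<and> y \<in> Z" using tot X Y by blast
      then obtain Z where Z: "Z \<in> CC" "x \<in> Z" "y \<in> Z" by blast
      have "is_subring Z" using Z CF unfolding F_def by blast
      then show "x + y \<in> \<Union>CC" "x * y \<in> \<Union>CC" using Z sr_add sr_mult by blast+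
    next
      fix x assume "x \<in> \<Union>CC"
      then obtain X where X: "X \<in> CC" "x \<in> X" by blast
      have "is_subring X" using X CF unfolding F_def by blast
      then show "- x \<in> \<Union>CC" using X sr_neg by blast
    qed
    moreover have "B \<subseteq> \<Union>CC" using ne CF unfolding F_def by blast
    moreover have "v \<notin> \<Union>CC" using CF unfolding F_def by blast
    ultimately show ?thesis unfolding F_def by blast
  qed
  ultimately obtain R where RF: "R \<in> F" and Rmax: "\<forall>X\<in>F. R \<subseteq> X \<longrightarrow> X = R"
    using subset_Zorn_nonempty[of F] by blast
  have srR: "is_subring R" and BR: "B \<subseteq> R" and vR: "v \<notin> R" using RF unfolding F_def by auto
  have RC: "R \<inter> center = A"
  proof -
    have "is_subring (R \<inter> center)" using sr_int[OF srR cen_subring] .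
    moreover have "A \<subseteq> R \<inter> center" using AB BR Ac by blast
    moreover have "R \<inter> center \<noteq> center" using vR vc by blast
    ultimately show ?thesis using maxA by blast
  qed
  have "maximal_subring UNIV R"
    unfolding maximal_subring_def
  proof (intro conjI allI impI)
    show "is_subring R" by (rule srR)
    show "R \<subseteq> UNIV" by simp
    show "R \<noteq> UNIV" using vR by blast
  next
    fix Q assume Q: "is_subring Q \<and> R \<subseteq> Q \<and> Q \<subseteq> UNIV"
    show "Q = R \<or> Q = UNIV"
    proof (cases "v \<in> Q")
      case False
      then have "Q \<in> F" using Q BR unfolding F_def by blast
      then show ?thesis using Rmax Q by blast
    next
      case True
      have srQ: "is_subring Q" using Q by blast
      have "x \<in> Q" for x
      proof -
        obtain n c where c: "\<forall>i<n. c i \<in> center" and eq: "x ^ n + (\<Sum>i<n. c i * x ^ i) = 0"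
          using assms(2) unfolding integral_over_def by blast
        have "\<forall>i. \<exists>m. i < n \<longrightarrow> (\<forall>k\<ge>m. c i * u ^ k \<in> A)"
          using c Scen unfolding S_def by blast
        then obtain mm where mm: "\<And>i k. i < n \<Longrightarrow> k \<ge> mm i \<Longrightarrow> c i * u ^ k \<in> A"
          by metis
        define M where "M = (\<Sum>i<n. mm i)"
        have cM: "c i * u ^ M \<in> A" if "i < n" for i
        proof -
          have "mm i \<le> M" unfolding M_def using that
            by (intro member_le_sum) auto
          then show ?thesis using mm that by blast
        qed
        define y where "y = u ^ M * x"
        define N where "N = u ^ (M * n)"
        have uMc: "u ^ M \<in> center" using cen_pow[OF uc] .
        have Nc: "N \<in> center" unfolding N_def using cen_pow[OF uc] .
        define c' where "c' i = c i * u ^ M * u ^ (M * (n - Suc i))" for i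
        have c'A: "\<forall>i<n. c' i \<in> A" unfolding c'_def
          using cM sr_mult[OF srA] sr_pow[OF srA uA] by blast
        have yn: "y ^ n = N * x ^ n" unfolding y_def N_def
          using cen_pow_mult[OF uMc] by (simp add: power_mult)
        have ys: "(\<Sum>i<n. c' i * y ^ i) = N * (\<Sum>i<n. c i * x ^ i)"
          unfolding sum_distrib_left
        proof (rule sum.cong)
          fix i assume "i \<in> {..<n}"
          then have i: "i < n" by simp
          have e: "M + M * (n - Suc i) + M * i = M * n"
          proof -
            have "1 + (n - Suc i) + i = n" using i by simp
            then have "M * (1 + (n - Suc i) + i) = M * n" by simp
            then show ?thesis by (simp add: distrib_left)
          qed
          have "c' i * y ^ i = c i * (u ^ M * u ^ (M * (n - Suc i)) * u ^ (M * i)) * x ^ i"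
            unfolding c'_def y_def using cen_pow_mult[OF uMc, of x i]
            by (simp add: power_mult mult.assoc)
          also have "\<dots> = c i * N * x ^ i" unfolding N_def
            by (simp add: power_add[symmetric] e)
          also have "\<dots> = N * (c i * x ^ i)" using cen[OF Nc, of "c i"] by (simp add: mult.assoc[symmetric])
          finally show "c' i * y ^ i = N * (c i * x ^ i)" .
        qed simp
        have "y ^ n + (\<Sum>i<n. c' i * y ^ i) = N * (x ^ n + (\<Sum>i<n. c i * x ^ i))"
          using yn ys by (simp add: distrib_left)
        then have "y ^ n + (\<Sum>i<n. c' i * y ^ i) = 0" using eq by simp
        then have "integral_over A y" unfolding integral_over_def using c'A by blast
        then have "y \<in> B" unfolding B_def integral_closure_def by simp
        then have yQ: "y \<in> Q" using BR Q by blast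
        have "v ^ M * y = x" unfolding y_def using pow_inv[OF vu, of M]
          by (simp add: mult.assoc[symmetric])
        then show "x \<in> Q" using sr_mult[OF srQ sr_pow[OF srQ True, of M] yQ] by simp
      qed
      then show ?thesis by blast
    qed
  qed
  then show ?thesis using BR RC B_def by blast
qed

end
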